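(* Every tree (in which every nontrivial pseudo-supremum is a supremum) that is collectionwise Hausdorff in the interval topology is countably metacompact.
   Context: A tree is a partially ordered set in which the set of predecessors of each element is well-ordered. For a nonempty chain bounded above, its pseudo-supremum is the set of its minimal upper bounds; standing assumption: each such set is a singleton. The interval topology has as base all sets $(s,t]=\{x:s<x\le t\}$ together with all singletons $\{t\}$ with $t$ minimal. A space is collectionwise Hausdorff if every closed discrete subset $D$ can be expanded to a pairwise disjoint family of open sets $\{U_d:d\in D\}$ with $d\in U_d$. A space is countably metacompact if every countable open cover has a point-finite open refinement. *)

theory Defs
  imports "HOL-Analysis.Analysis"
begin

definition tle :: "('a \<Rightarrow> 'a \<Rightarrow> bool) \<Rightarrow> 'a \<Rightarrow> 'a \<Rightarrow> bool" where
  "tle lt x y \<longleftrightarrow> lt x y \<or> x = y"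

definition preds :: "'a set \<Rightarrow> ('a \<Rightarrow> 'a \<Rightarrow> bool) \<Rightarrow> 'a \<Rightarrow> 'a set" where
  "preds T lt t = {s \<in> T. lt s t}"

definition is_tree :: "'a set \<Rightarrow> ('a \<Rightarrow> 'a \<Rightarrow> bool) \<Rightarrow> bool" where
  "is_tree T lt \<longleftrightarrow>
     (\<forall>x\<in>T. \<not> lt x x) \<and>
     (\<forall>x\<in>T. \<forall>y\<in>T. \<forall>z\<in>T. lt x y \<and> lt y z \<longrightarrow> lt x z) \<and>
     (\<forall>t\<in>T.
        (\<forall>x\<in>preds T lt t. \<forall>y\<in>preds T lt t. lt x y \<or> x = y \<or> lt y x) \<and>
        (\<forall>S. S \<subseteq> preds T lt t \<and> S \<noteq> {} \<longrightarrow> (\<exists>m\<in>S. \<forall>s\<in>S. \<not> lt s m)))"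

definition is_chain :: "'a set \<Rightarrow> ('a \<Rightarrow> 'a \<Rightarrow> bool) \<Rightarrow> 'a set \<Rightarrow> bool" where
  "is_chain T lt C \<longleftrightarrow> C \<subseteq> T \<and> (\<forall>x\<in>C. \<forall>y\<in>C. lt x y \<or> x = y \<or> lt y x)"

definition upper_bounds :: "'a set \<Rightarrow> ('a \<Rightarrow> 'a \<Rightarrow> bool) \<Rightarrow> 'a set \<Rightarrow> 'a set" where
  "upper_bounds T lt C = {u \<in> T. \<forall>c\<in>C. tle lt c u}"

definition pseudo_sup :: "'a set \<Rightarrow> ('a \<Rightarrow> 'a \<Rightarrow> bool) \<Rightarrow> 'a set \<Rightarrow> 'a set" where
  "pseudo_sup T lt C =
     {u \<in> upper_bounds T lt C. \<not> (\<exists>v\<in>upper_bounds T lt C. lt v u)}"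

definition pseudo_sups_singletons :: "'a set \<Rightarrow> ('a \<Rightarrow> 'a \<Rightarrow> bool) \<Rightarrow> bool" where
  "pseudo_sups_singletons T lt \<longleftrightarrow>
     (\<forall>C. is_chain T lt C \<and> C \<noteq> {} \<and> upper_bounds T lt C \<noteq> {}
          \<longrightarrow> (\<exists>u. pseudo_sup T lt C = {u}))"

definition interval_topology :: "'a set \<Rightarrow> ('a \<Rightarrow> 'a \<Rightarrow> bool) \<Rightarrow> 'a topology" where
  "interval_topology T lt = topology_generated_by
     ({{x \<in> T. lt s x \<and> tle lt x t} | s t. s \<in> T \<and> t \<in> T} \<union>
      {{t} | t. t \<in> T \<and> \<not> (\<exists>s\<in>T. lt s t)})"

definition collectionwise_hausdorff :: "'a topology \<Rightarrow> bool" where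
  "collectionwise_hausdorff X \<longleftrightarrow>
     (\<forall>D. closedin X D \<and> subtopology X D = discrete_topology D \<longrightarrow>
        (\<exists>U. (\<forall>d\<in>D. openin X (U d) \<and> d \<in> U d) \<and>
             (\<forall>d\<in>D. \<forall>e\<in>D. d \<noteq> e \<longrightarrow> U d \<inter> U e = {})))"

definition countably_metacompact :: "'a topology \<Rightarrow> bool" where
  "countably_metacompact X \<longleftrightarrow>
     (\<forall>\<U>. countable \<U> \<and> (\<forall>U\<in>\<U>. openin X U) \<and> \<Union>\<U> = topspace X \<longrightarrow>
        (\<exists>\<V>. (\<forall>V\<in>\<V>. openin X V) \<and> \<Union>\<V> = topspace X \<and>
              (\<forall>V\<in>\<V>. \<exists>U\<in>\<U>. V \<subseteq> U) \<and>
              (\<forall>x\<in>topspace X. finite {V\<in>\<V>. x \<in> V})))"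

end

theory Submission
  imports Defs
begin

lemma Fmono: assumes "m \<le> (n::nat)" shows "{x \<in> T. \<forall>i<n. x \<notin> u i} \<subseteq> {x \<in> T. \<forall>i<m. x \<notin> u i}"
proof -
  have "\<forall>i<m. i < n" using assms by simp
  then show ?thesis by auto
qed

locale tr =
  fixes T :: "'a set" and lt :: "'a \<Rightarrow> 'a \<Rightarrow> bool"
  assumes tree: "is_tree T lt"
begin

abbreviation "X \<equiv> interval_topology T lt"

lemma irr: "x \<in> T \<Longrightarrow> \<not> lt x x"
  using tree unfolding is_tree_def by blast

lemma trans: "x \<in> T \<Longrightarrow> y \<in> T \<Longrightarrow> z \<in> T \<Longrightarrow> lt x y \<Longrightarrow> lt y z \<Longrightarrow> lt x z"
  using tree unfolding is_tree_def by blast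

lemma lin: "p \<in> T \<Longrightarrow> x \<in> T \<Longrightarrow> y \<in> T \<Longrightarrow> lt x p \<Longrightarrow> lt y p \<Longrightarrow> lt x y \<or> x = y \<or> lt y x"
  using tree unfolding is_tree_def preds_def by blast

lemma wf: "p \<in> T \<Longrightarrow> S \<subseteq> preds T lt p \<Longrightarrow> S \<noteq> {} \<Longrightarrow> \<exists>m\<in>S. \<forall>s\<in>S. \<not> lt s m"
  using tree unfolding is_tree_def by (metis (no_types, lifting))

lemma tle_trans: "x \<in> T \<Longrightarrow> y \<in> T \<Longrightarrow> z \<in> T \<Longrightarrow> tle lt x y \<Longrightarrow> tle lt y z \<Longrightarrow> tle lt x z"
  unfolding tle_def using trans by blast

lemma lt_tle_trans: "x \<in> T \<Longrightarrow> y \<in> T \<Longrightarrow> z \<in> T \<Longrightarrow> lt x y \<Longrightarrow> tle lt y z \<Longrightarrow> lt x z"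
  unfolding tle_def using trans by blast

lemma tle_cmp: "p \<in> T \<Longrightarrow> x \<in> T \<Longrightarrow> y \<in> T \<Longrightarrow> tle lt x p \<Longrightarrow> tle lt y p \<Longrightarrow> tle lt x y \<or> lt y x"
  unfolding tle_def using lin by blast

lemma open_ivl: "s \<in> T \<Longrightarrow> t \<in> T \<Longrightarrow> openin X {x \<in> T. lt s x \<and> tle lt x t}"
  unfolding interval_topology_def by (rule topology_generated_by_Basis) blast

lemma open_min: "t \<in> T \<Longrightarrow> \<not> (\<exists>s\<in>T. lt s t) \<Longrightarrow> openin X {t}"
  unfolding interval_topology_def by (rule topology_generated_by_Basis) blast

lemma topspace_X: "topspace X = T"
proof -
  have "\<Union>({{x \<in> T. lt s x \<and> tle lt x t} | s t. s \<in> T \<and> t \<in> T} \<union>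
      {{t} | t. t \<in> T \<and> \<not> (\<exists>s\<in>T. lt s t)}) = T" (is "?U = T")
  proof
    show "?U \<subseteq> T" by blast
    show "T \<subseteq> ?U"
    proof
      fix t assume t: "t \<in> T"
      show "t \<in> ?U"
      proof (cases "\<exists>s\<in>T. lt s t")
        case True
        then obtain s where "s \<in> T" "lt s t" by blast
        then have "t \<in> {x \<in> T. lt s x \<and> tle lt x t}" using t by (simp add: tle_def)
        then show ?thesis using \<open>s \<in> T\<close> t by blast
      next
        case False then show ?thesis using t by blast
      qed
    qed
  qed
  then show ?thesis unfolding interval_topology_def by simp
qed

lemma nbhd:
  assumes "openin X Op" "p \<in> Op" "p \<in> T" "\<exists>s\<in>T. lt s p"
  shows "\<exists>s\<in>T. lt s p \<and> {x \<in> T. lt s x \<and> tle lt x p} \<subseteq> Op"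
proof -
  have "generate_topology_on
     ({{x \<in> T. lt s x \<and> tle lt x t} | s t. s \<in> T \<and> t \<in> T} \<union>
      {{t} | t. t \<in> T \<and> \<not> (\<exists>s\<in>T. lt s t)}) Op"
    using assms(1) unfolding interval_topology_def by (rule openin_topology_generated_by)
  then show ?thesis using assms(2-4)
  proof (induction Op)
    case Empty then show ?case by simp
  next
    case (Int a b)
    then obtain s1 s2 where s1: "s1 \<in> T" "lt s1 p" "{x \<in> T. lt s1 x \<and> tle lt x p} \<subseteq> a"
      and s2: "s2 \<in> T" "lt s2 p" "{x \<in> T. lt s2 x \<and> tle lt x p} \<subseteq> b" by auto
    from lin[OF \<open>p \<in> T\<close> s1(1) s2(1) s1(2) s2(2)] show ?case
    proof (elim disjE)
      assume "lt s1 s2"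
      then have "{x \<in> T. lt s2 x \<and> tle lt x p} \<subseteq> a" using s1 s2 trans by blast
      then show ?case using s2 by blast
    next
      assume "s1 = s2" then show ?case using s1 s2 by blast
    next
      assume "lt s2 s1"
      then have "{x \<in> T. lt s1 x \<and> tle lt x p} \<subseteq> b" using s1 s2 trans by blast
      then show ?case using s1 by blast
    qed
  next
    case (UN K)
    then obtain k where "k \<in> K" "p \<in> k" by blast
    with UN show ?case by blast
  next
    case (Basis s)
    then show ?case
    proof (elim UnE)
      assume "s \<in> {{x \<in> T. lt s x \<and> tle lt x t} | s t. s \<in> T \<and> t \<in> T}"
      then obtain a b where ab: "a \<in> T" "b \<in> T" "s = {x \<in> T. lt a x \<and> tle lt x b}" by blast
      then have "lt a p" "tle lt p b" using Basis by auto
      then have "{x \<in> T. lt a x \<and> tle lt x p} \<subseteq> s" using ab \<open>p \<in> T\<close> tle_trans by blast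
      then show ?case using ab \<open>lt a p\<close> by blast
    next
      assume "s \<in> {{t} | t. t \<in> T \<and> \<not> (\<exists>s\<in>T. lt s t)}"
      then show ?case using Basis by blast
    qed
  qed
qed

lemma open_upper: "openin X {z \<in> T. \<exists>d\<in>A. lt d z}" if "A \<subseteq> T"
proof (subst openin_subopen, intro ballI)
  fix z assume "z \<in> {z \<in> T. \<exists>d\<in>A. lt d z}"
  then obtain d where d: "z \<in> T" "d \<in> A" "lt d z" by blast
  have "openin X {x \<in> T. lt d x \<and> tle lt x z}" using open_ivl d that by blast
  moreover have "z \<in> {x \<in> T. lt d x \<and> tle lt x z}" using d by (simp add: tle_def)
  moreover have "{x \<in> T. lt d x \<and> tle lt x z} \<subseteq> {z \<in> T. \<exists>d\<in>A. lt d z}" using d by blast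
  ultimately show "\<exists>T'. openin X T' \<and> z \<in> T' \<and> T' \<subseteq> {z \<in> T. \<exists>d\<in>A. lt d z}" by blast
qed

lemma mins_closed_discrete:
  assumes G: "G \<subseteq> T"
  defines "D \<equiv> {x \<in> G. \<not> (\<exists>d\<in>G. lt d x)}"
  shows "closedin X D \<and> subtopology X D = discrete_topology D"
proof
  have DT: "D \<subseteq> T" using G unfolding D_def by blast
  show "closedin X D"
    unfolding closedin_def topspace_X
  proof (intro conjI DT, subst openin_subopen, intro ballI)
    fix p assume p: "p \<in> T - D"
    show "\<exists>T'. openin X T' \<and> p \<in> T' \<and> T' \<subseteq> T - D"
    proof (cases "\<exists>s\<in>T. lt s p")
      case False
      then show ?thesis using open_min[of p] p by blast
    next
      case True
      show ?thesis
      proof (cases "\<exists>d\<in>D. lt d p")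
        case True
        then obtain d where d: "d \<in> D" "lt d p" by blast
        have "openin X {x \<in> T. lt d x \<and> tle lt x p}" using open_ivl d DT p by blast
        moreover have "p \<in> {x \<in> T. lt d x \<and> tle lt x p}" using d p by (simp add: tle_def)
        moreover have "{x \<in> T. lt d x \<and> tle lt x p} \<subseteq> T - D" using d unfolding D_def by blast
        ultimately show ?thesis by blast
      next
        case False
        from True obtain s where s: "s \<in> T" "lt s p" by blast
        have "openin X {x \<in> T. lt s x \<and> tle lt x p}" using open_ivl s p by blast
        moreover have "p \<in> {x \<in> T. lt s x \<and> tle lt x p}" using s p by (simp add: tle_def)
        moreover have "{x \<in> T. lt s x \<and> tle lt x p} \<subseteq> T - D" using False p unfolding tle_def by blast
        ultimately show ?thesis by blast
      qed
    qed
  qed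
  show "subtopology X D = discrete_topology D"
    unfolding eq_commute[of "subtopology X D"] discrete_topology_unique
  proof (intro conjI ballI)
    show "topspace (subtopology X D) = D" using DT by (auto simp add: topspace_X)
    fix x assume x: "x \<in> D"
    show "openin (subtopology X D) {x}"
      unfolding openin_subtopology
    proof (cases "\<exists>s\<in>T. lt s x")
      case False
      then show "\<exists>T'. openin X T' \<and> {x} = T' \<inter> D" using open_min[of x] x DT by blast
    next
      case True
      then obtain s where s: "s \<in> T" "lt s x" by blast
      have "openin X {y \<in> T. lt s y \<and> tle lt y x}" using open_ivl s x DT by blast
      moreover have "{x} = {y \<in> T. lt s y \<and> tle lt y x} \<inter> D"
        using x s DT unfolding D_def tle_def by blast
      ultimately show "\<exists>T'. openin X T' \<and> {x} = T' \<inter> D" by blast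
    qed
  qed
qed


lemma escape:
  fixes u :: "nat \<Rightarrow> 'a set"
  assumes uo: "\<forall>i. openin X (u i)" and cov: "\<forall>x\<in>T. \<exists>i. x \<in> u i"
    and y: "y \<in> T"
  shows "\<exists>n. y \<notin> {z \<in> T. \<exists>x\<in>{x \<in> T. \<forall>i<n. x \<notin> u i}. tle lt x z}"
proof (rule ccontr)
  define F where "F n = {x \<in> T. \<forall>i<n. x \<notin> u i}" for n
  define G where "G n = {z \<in> T. \<exists>x\<in>F n. tle lt x z}" for n
  assume "\<not> ?thesis"
  then have all: "\<forall>n. y \<in> G n" unfolding G_def F_def by simp
  have Fdec: "m \<le> n \<Longrightarrow> F n \<subseteq> F m" for m n unfolding F_def by (fact Fmono)
  have Gdec: "m \<le> n \<Longrightarrow> G n \<subseteq> G m" for m n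
    proof -
      assume "m \<le> n" then have "F n \<subseteq> F m" by (rule Fdec)
      then show ?thesis unfolding G_def by blast
    qed
  define B where "B = {w \<in> T. tle lt w y \<and> (\<forall>n. w \<in> G n)}"
  have yB: "y \<in> B" using y all unfolding B_def tle_def by blast
  obtain p where pB: "p \<in> B" and pmin: "\<forall>w\<in>B. \<not> lt w p"
  proof (cases "B \<inter> preds T lt y = {}")
    case True
    have "\<forall>w\<in>B. \<not> lt w y"
    proof
      fix w assume "w \<in> B"
      then have "w \<in> T" unfolding B_def by blast
      then show "\<not> lt w y" using True \<open>w \<in> B\<close> unfolding preds_def by blast
    qed
    then show ?thesis using that[OF yB] by blast
  next
    case False
    obtain m where m: "m \<in> B \<inter> preds T lt y" "\<forall>s\<in>B \<inter> preds T lt y. \<not> lt s m"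
      using wf[OF y _ False] by blast
    have "\<forall>w\<in>B. \<not> lt w m"
    proof
      fix w assume w: "w \<in> B"
      show "\<not> lt w m"
      proof
        assume "lt w m"
        moreover have "w \<in> T" using w unfolding B_def by blast
        moreover have "m \<in> T" "lt m y" using m(1) unfolding preds_def by auto
        ultimately have "lt w y" using trans[of w m y] y by blast
        then have "w \<in> B \<inter> preds T lt y" using w unfolding B_def preds_def by blast
        then show False using m(2) \<open>lt w m\<close> by blast
      qed
    qed
    then show ?thesis using that m by blast
  qed
  have pT: "p \<in> T" and py: "tle lt p y" and pG: "\<forall>n. p \<in> G n" using pB unfolding B_def by auto
  have pF: "p \<in> F k" for k
  proof (rule ccontr)
    assume npF: "p \<notin> F k"
    then obtain i where i: "i < k" "p \<in> u i" using pT unfolding F_def by blast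
    obtain x where x: "x \<in> F k" "tle lt x p" using pG unfolding G_def by blast
    have "x \<noteq> p" using x npF by blast
    then have "lt x p" "x \<in> T" using x unfolding tle_def F_def by auto
    then obtain s where s: "s \<in> T" "lt s p" "{z \<in> T. lt s z \<and> tle lt z p} \<subseteq> u i"
      using nbhd[of "u i" p, OF uo[rule_format] i(2) pT] \<open>lt x p\<close> \<open>x \<in> T\<close> by blast
    have "lt s y" using lt_tle_trans[OF s(1) pT y s(2) py] .
    then have "tle lt s y" unfolding tle_def by blast
    then have "s \<notin> B" using pmin s by blast
    then obtain n where n: "s \<notin> G n" using s \<open>tle lt s y\<close> unfolding B_def by blast
    define m where "m = max n k"
    obtain x' where x': "x' \<in> F m" "tle lt x' p" using pG unfolding G_def by blast
    have x'T: "x' \<in> T" using x' unfolding F_def by blast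
    from tle_cmp[OF pT x'T s(1) x'(2)] s(2) have "tle lt x' s \<or> lt s x'" unfolding tle_def by blast
    then show False
    proof
      assume "tle lt x' s"
      then have "s \<in> G m" using x' s unfolding G_def by blast
      then show False using Gdec[of n m] n unfolding m_def by auto
    next
      assume "lt s x'"
      then have "x' \<in> u i" using s x' x'T by blast
      moreover have "x' \<notin> u i" using x' i unfolding F_def m_def by auto
      ultimately show False by blast
    qed
  qed
  obtain i where "p \<in> u i" using cov pT by blast
  then show False using pF[of "Suc i"] unfolding F_def by blast
qed

lemma main:
  assumes cwh: "collectionwise_hausdorff X"
  shows "countably_metacompact X"
  unfolding countably_metacompact_def
proof (intro allI impI, elim conjE)
  fix \<U> :: "'a set set"
  assume cnt: "countable \<U>" and opn: "\<forall>U\<in>\<U>. openin X U" and cov: "\<Union>\<U> = topspace X"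
  show "\<exists>\<V>. (\<forall>V\<in>\<V>. openin X V) \<and> \<Union>\<V> = topspace X \<and>
              (\<forall>V\<in>\<V>. \<exists>U\<in>\<U>. V \<subseteq> U) \<and>
              (\<forall>x\<in>topspace X. finite {V\<in>\<V>. x \<in> V})"
  proof (cases "\<U> = {}")
    case True
    then show ?thesis using cov by (intro exI[of _ "{}"]) auto
  next
    case False
    define u where "u = from_nat_into \<U>"
    have ru: "range u = \<U>" unfolding u_def using range_from_nat_into[OF False cnt] .
    have uo: "\<forall>i. openin X (u i)" using opn ru by blast
    have covu: "\<forall>x\<in>T. \<exists>i. x \<in> u i" using cov ru topspace_X by auto
    have uT: "u i \<subseteq> T" for i using openin_subset[of X "u i"] uo topspace_X by auto
    define F where "F n = {x \<in> T. \<forall>i<n. x \<notin> u i}" for n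
    define G where "G n = {z \<in> T. \<exists>x\<in>F n. tle lt x z}" for n
    define D where "D n = {x \<in> G n. \<not> (\<exists>d\<in>G n. lt d x)}" for n
    define P where "P n = {z \<in> T. \<exists>d\<in>G n. lt d z}" for n
    have GT: "G n \<subseteq> T" for n unfolding G_def by blast
    have DG: "D n \<subseteq> G n" for n unfolding D_def by blast
    have Fdec: "m \<le> n \<Longrightarrow> F n \<subseteq> F m" for m n unfolding F_def by (fact Fmono)
    have Gdec: "m \<le> n \<Longrightarrow> G n \<subseteq> G m" for m n
    proof -
      assume "m \<le> n" then have "F n \<subseteq> F m" by (rule Fdec)
      then show ?thesis unfolding G_def by blast
    qed
    have esc: "\<forall>y\<in>T. \<exists>n. y \<notin> G n" using escape[OF uo covu] unfolding G_def F_def by blast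
    have cd: "closedin X (D n) \<and> subtopology X (D n) = discrete_topology (D n)" for n
      unfolding D_def using mins_closed_discrete[OF GT] .
    have "\<forall>n. \<exists>U. (\<forall>d\<in>D n. openin X (U d) \<and> d \<in> U d) \<and>
             (\<forall>d\<in>D n. \<forall>e\<in>D n. d \<noteq> e \<longrightarrow> U d \<inter> U e = {})"
      using cwh cd unfolding collectionwise_hausdorff_def by blast
    then obtain U where U: "\<And>n. (\<forall>d\<in>D n. openin X (U n d) \<and> d \<in> U n d) \<and>
             (\<forall>d\<in>D n. \<forall>e\<in>D n. d \<noteq> e \<longrightarrow> U n d \<inter> U n e = {})" by metis
    define A where "A n x = U n x \<inter> (case n of 0 \<Rightarrow> T | Suc m \<Rightarrow> (if x \<in> D m then U m x else P m))" for n x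
    define W where "W n = P n \<union> \<Union>(A n ` D n)" for n
    define W' where "W' n = \<Inter>(W ` {..n})" for n
    have Popen: "openin X (P n)" for n unfolding P_def using open_upper[OF GT] .
    have PG: "P n \<subseteq> G n" for n
    proof
      fix z assume "z \<in> P n"
      then obtain d where d: "z \<in> T" "d \<in> G n" "lt d z" unfolding P_def by blast
      then obtain x where x: "x \<in> F n" "tle lt x d" unfolding G_def by blast
      have "tle lt x z" using tle_trans[of x d z] x d GT F_def unfolding tle_def by blast
      then show "z \<in> G n" using x d unfolding G_def by blast
    qed
    have Aopen: "x \<in> D n \<Longrightarrow> openin X (A n x)" for x n
    proof (cases n)
      case 0
      assume "x \<in> D n"
      then show ?thesis unfolding A_def using 0 U[of n] openin_topspace[of X] topspace_X by auto
    next
      case (Suc m)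
      assume "x \<in> D n"
      then show ?thesis unfolding A_def using Suc U[of n] U[of m] Popen[of m] by auto
    qed
    have AU: "A n x \<subseteq> U n x" for n x unfolding A_def by blast
    have xA: "x \<in> A n x" if x: "x \<in> D n" for x n
    proof (cases n)
      case 0
      then show ?thesis unfolding A_def using U[of n] x DG GT by auto
    next
      case (Suc m)
      have "x \<in> G m" using x DG Gdec[of m n] Suc by auto
      then have "x \<notin> D m \<Longrightarrow> x \<in> P m" unfolding D_def P_def using GT by blast
      then show ?thesis unfolding A_def using Suc U[of n] U[of m] x by auto
    qed
    have Wopen: "openin X (W n)" for n
      unfolding W_def using Popen Aopen by (intro openin_Un openin_Union) auto
    have FW: "F n \<subseteq> W n" for n
    proof
      fix x assume x: "x \<in> F n"
      then have xG: "x \<in> G n" unfolding G_def F_def tle_def by blast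
      show "x \<in> W n"
      proof (cases "\<exists>d\<in>G n. lt d x")
        case True then show ?thesis using xG GT unfolding W_def P_def by blast
      next
        case False then have "x \<in> D n" using xG unfolding D_def by blast
        then show ?thesis using xA unfolding W_def by blast
      qed
    qed
    have W'open: "openin X (W' n)" for n
      unfolding W'_def using Wopen by (intro openin_Inter) auto
    have escW: "\<exists>m. y \<notin> W m" if y: "y \<in> T" for y
    proof (rule ccontr)
      assume "\<not> ?thesis"
      then have allW: "\<forall>m. y \<in> W m" by blast
      obtain N where N: "y \<notin> G N" using esc y by blast
      have yG: "n \<ge> N \<Longrightarrow> y \<notin> G n" for n using N Gdec by blast
      have yP: "n \<ge> N \<Longrightarrow> y \<notin> P n" for n using yG PG by blast
      have ex: "n \<ge> N \<Longrightarrow> \<exists>x. x \<in> D n \<and> y \<in> A n x" for n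
        using allW[rule_format, of n] yP[of n] unfolding W_def by blast
      define xs where "xs n = (SOME x. x \<in> D n \<and> y \<in> A n x)" for n
      have xs: "n \<ge> N \<Longrightarrow> xs n \<in> D n \<and> y \<in> A n (xs n)" for n
        unfolding xs_def using someI_ex[OF ex] by blast
      have step: "xs (Suc n) = xs n" if n: "n \<ge> N" for n
      proof -
        have "y \<in> (if xs (Suc n) \<in> D n then U n (xs (Suc n)) else P n)"
          using xs[of "Suc n"] n unfolding A_def by auto
        then have a: "xs (Suc n) \<in> D n" "y \<in> U n (xs (Suc n))" using yP[OF n] by (auto split: if_splits)
        have b: "xs n \<in> D n" "y \<in> U n (xs n)" using xs[OF n] AU by auto
        show ?thesis using U[of n] a b by blast
      qed
      have const: "xs (N + k) = xs N" for k
        by (induction k) (use step in auto)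
      have "xs N \<in> G n" for n
      proof -
        have "xs N \<in> G (N + n)" using xs[of "N + n"] const[of n] DG by auto
        then show ?thesis using Gdec[of n "N + n"] by auto
      qed
      moreover have "xs N \<in> T" using xs[of N] DG GT by blast
      ultimately show False using esc by blast
    qed
    define \<V> where "\<V> = range (\<lambda>n. u n \<inter> W' n)"
    show ?thesis
    proof (intro exI[of _ \<V>] conjI ballI)
      show "openin X V" if "V \<in> \<V>" for V
        using that uo W'open unfolding \<V>_def by auto
      show "V \<in> \<V> \<Longrightarrow> \<exists>U\<in>\<U>. V \<subseteq> U" for V
        unfolding \<V>_def using ru by blast
      show "\<Union>\<V> = topspace X"
      proof
        show "\<Union>\<V> \<subseteq> topspace X" unfolding \<V>_def using uT topspace_X by auto
        show "topspace X \<subseteq> \<Union>\<V>"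
        proof
          fix x assume "x \<in> topspace X"
          then have xT: "x \<in> T" using topspace_X by simp
          then obtain i where "x \<in> u i" using covu by blast
          define n where "n = (LEAST i. x \<in> u i)"
          have xn: "x \<in> u n" unfolding n_def by (rule LeastI) fact
          have "\<forall>i<n. x \<notin> u i" unfolding n_def using not_less_Least by blast
          then have "x \<in> F n" using xT unfolding F_def by blast
          then have "x \<in> W' n" unfolding W'_def using Fdec FW by fastforce
          then show "x \<in> \<Union>\<V>" using xn unfolding \<V>_def by blast
        qed
      qed
      fix x assume "x \<in> topspace X"
      then obtain m where m: "x \<notin> W m" using escW topspace_X by auto
      have "{V\<in>\<V>. x \<in> V} \<subseteq> (\<lambda>n. u n \<inter> W' n) ` {..<m}"
      proof
        fix V assume "V \<in> {V\<in>\<V>. x \<in> V}"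
        then obtain n where V: "V = u n \<inter> W' n" "x \<in> V" unfolding \<V>_def by blast
        have "n < m"
        proof (rule ccontr)
          assume "\<not> n < m"
          then have "W' n \<subseteq> W m" unfolding W'_def by auto
          then show False using V m by blast
        qed
        then show "V \<in> (\<lambda>n. u n \<inter> W' n) ` {..<m}" using V by blast
      qed
      then show "finite {V\<in>\<V>. x \<in> V}" by (rule finite_subset) auto
    qed
  qed
qed
end

theorem corollary4p22:
  fixes T :: "'a set" and lt :: "'a \<Rightarrow> 'a \<Rightarrow> bool"
  assumes "is_tree T lt"
    and "pseudo_sups_singletons T lt"
    and "collectionwise_hausdorff (interval_topology T lt)"
  shows "countably_metacompact (interval_topology T lt)"
  using tr.main[OF tr.intro[OF assms(1)] assms(3)] .

end
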